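(* $\mathfrak{L}(BS(1,2)) \not\subseteq \mathsf{CF}$; that is, some language recognized by a $BS(1,2)$-automaton is not context-free.
   Context: For a group $G$ with identity $e$, a $G$-automaton is a tuple $(Q,\Sigma,G,\delta,q_0,Q_a)$ where $Q$ is a finite set of states, $\Sigma$ a finite input alphabet, $q_0\in Q$ the initial state, $Q_a\subseteq Q$ the accepting states, and $\delta$ assigns to each $(q,\sigma)\in Q\times(\Sigma\cup\{\varepsilon\})$ a finite set of pairs $(q',m)\in Q\times G$. The register holds an element of $G$, initially $e$; using a transition $(q',m)\in\delta(q,\sigma)$ the automaton reads $\sigma$ (or nothing), moves to $q'$ and replaces the register content $x$ by $xm$. A word is accepted if some computation reads it entirely and ends in an accepting state with register equal to $e$. $\mathfrak{L}(G)$ is the class of languages recognized by $G$-automata. $BS(1,2)$ is the Baumslag–Solitar group $\langle a,b\mid bab^{-1}=a^2\rangle$. $\mathsf{CF}$ is the class of context-free languages. *)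

theory Defs
  imports Complex_Main "HOL-Algebra.Group"
begin

text \<open>An automaton is given by a set of states Q, input alphabet Sig, a transition
function delta (None encodes the empty word epsilon, Some s the letter s),
an initial state q0 and a set of accepting states Qa.\<close>

definition is_G_automaton ::
  "('g, 'b) monoid_scheme \<Rightarrow> 'q set \<Rightarrow> 'a set \<Rightarrow> ('q \<Rightarrow> 'a option \<Rightarrow> ('q \<times> 'g) set)
   \<Rightarrow> 'q \<Rightarrow> 'q set \<Rightarrow> bool" where
  "is_G_automaton G Q Sig delta q0 Qa \<longleftrightarrow>
     finite Q \<and> finite Sig \<and> q0 \<in> Q \<and> Qa \<subseteq> Q \<and>
     (\<forall>q\<in>Q. \<forall>s. (s = None \<or> (\<exists>a\<in>Sig. s = Some a)) \<longrightarrow>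
        finite (delta q s) \<and> delta q s \<subseteq> Q \<times> carrier G)"

inductive runs ::
  "('g, 'b) monoid_scheme \<Rightarrow> ('q \<Rightarrow> 'a option \<Rightarrow> ('q \<times> 'g) set)
   \<Rightarrow> 'q \<Rightarrow> 'g \<Rightarrow> 'a list \<Rightarrow> 'q \<Rightarrow> 'g \<Rightarrow> bool"
  for G delta where
  run_nil: "runs G delta q x [] q x"
| run_eps: "(q', m) \<in> delta q None \<Longrightarrow> runs G delta q' (x \<otimes>\<^bsub>G\<^esub> m) w q'' y
            \<Longrightarrow> runs G delta q x w q'' y"
| run_read: "(q', m) \<in> delta q (Some s) \<Longrightarrow> runs G delta q' (x \<otimes>\<^bsub>G\<^esub> m) w q'' y
            \<Longrightarrow> runs G delta q x (s # w) q'' y"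

definition G_lang ::
  "('g, 'b) monoid_scheme \<Rightarrow> 'a set \<Rightarrow> ('q \<Rightarrow> 'a option \<Rightarrow> ('q \<times> 'g) set)
   \<Rightarrow> 'q \<Rightarrow> 'q set \<Rightarrow> 'a list set" where
  "G_lang G Sig delta q0 Qa =
     {w \<in> lists Sig. \<exists>q\<in>Qa. runs G delta q0 \<one>\<^bsub>G\<^esub> w q \<one>\<^bsub>G\<^esub>}"

text \<open>Standard faithful model: the group of affine maps x \<mapsto> 2^k x + r of the rationals,
with k an integer and r a dyadic rational; (k,r) encodes this map and the
product is composition.  The generator a is (0,1) (translation by 1), the generator
b is (1,0) (doubling); b a b^-1 = a^2 holds and BS(1,2) is isomorphic to this group.\<close>

definition BS12 :: "(int \<times> rat) monoid" where
  "BS12 = \<lparr> carrier = {(k, r). \<exists>(m::int) (n::nat). r = of_int m / 2 ^ n},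
            mult = (\<lambda>(k1, r1) (k2, r2). (k1 + k2, (2::rat) powi k1 * r2 + r1)),
            one = (0, 0) \<rparr>"

text \<open>A grammar is a set of productions (A, alpha) with A a nonterminal (Inl) and alpha
a word over nonterminals (Inl) and terminals (Inr).\<close>

inductive cfg_step :: "('n \<times> ('n + 't) list) set \<Rightarrow> ('n + 't) list \<Rightarrow> ('n + 't) list \<Rightarrow> bool"
  for P where
  "(A, alpha) \<in> P \<Longrightarrow> cfg_step P (u @ [Inl A] @ v) (u @ alpha @ v)"

definition cfg_lang :: "('n \<times> ('n + 't) list) set \<Rightarrow> 'n \<Rightarrow> 't list set" where
  "cfg_lang P S = {w. (cfg_step P)\<^sup>*\<^sup>* [Inl S] (map Inr w)}"

text \<open>Nonterminals are taken from nat, which is no restriction (finitely many are used).\<close>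
definition is_CFL :: "'t list set \<Rightarrow> bool" where
  "is_CFL L \<longleftrightarrow> (\<exists>(P :: (nat \<times> (nat + 't) list) set) S. finite P \<and> L = cfg_lang P S)"

end

theory Submission
  imports Defs
begin


datatype ('n,'t) ptree = Leaf 't | Node 'n "('n,'t) ptree list"

fun pt_root :: "('n,'t) ptree \<Rightarrow> ('n + 't)" where
  "pt_root (Leaf a) = Inr a" | "pt_root (Node A ts) = Inl A"
fun pt_yield :: "('n,'t) ptree \<Rightarrow> 't list" where
  "pt_yield (Leaf a) = [a]" | "pt_yield (Node A ts) = concat (map pt_yield ts)"
fun pt_valid :: "('n \<times> ('n + 't) list) set \<Rightarrow> ('n,'t) ptree \<Rightarrow> bool" where
  "pt_valid P (Leaf a) = True"
| "pt_valid P (Node A ts) = ((A, map pt_root ts) \<in> P \<and> (\<forall>t\<in>set ts. pt_valid P t))"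
fun pt_height :: "('n,'t) ptree \<Rightarrow> nat" where
  "pt_height (Leaf a) = 0" | "pt_height (Node A ts) = Suc (Max (set (0 # map pt_height ts)))"
fun pt_size :: "('n,'t) ptree \<Rightarrow> nat" where
  "pt_size (Leaf a) = 1" | "pt_size (Node A ts) = Suc (sum_list (map pt_size ts))"
fun pt_subs :: "('n,'t) ptree \<Rightarrow> ('n,'t) ptree set" where
  "pt_subs (Leaf a) = {Leaf a}" | "pt_subs (Node A ts) = insert (Node A ts) (\<Union> (pt_subs ` set ts))"



lemma der_ctx: "(cfg_step P)\<^sup>*\<^sup>* a b \<Longrightarrow> (cfg_step P)\<^sup>*\<^sup>* (x @ a @ y) (x @ b @ y)"
proof (induction rule: rtranclp_induct)
  case base then show ?case by simp
next
  case (step b c)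
  from step.hyps(2) obtain u A v al where "b = u @ [Inl A] @ v" "c = u @ al @ v" "(A, al) \<in> P"
    by (auto elim: cfg_step.cases)
  then have "cfg_step P ((x @ u) @ [Inl A] @ (v @ y)) ((x @ u) @ al @ (v @ y))"
    by (intro cfg_step.intros)
  then have "cfg_step P (x @ b @ y) (x @ c @ y)" using \<open>b = _\<close> \<open>c = _\<close> by simp
  with step.IH show ?case by (rule rtranclp.rtrancl_into_rtrancl)
qed

lemma der_app: "(cfg_step P)\<^sup>*\<^sup>* a b \<Longrightarrow> (cfg_step P)\<^sup>*\<^sup>* c d \<Longrightarrow> (cfg_step P)\<^sup>*\<^sup>* (a @ c) (b @ d)"
proof -
  assume 1: "(cfg_step P)\<^sup>*\<^sup>* a b" and 2: "(cfg_step P)\<^sup>*\<^sup>* c d"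
  have "(cfg_step P)\<^sup>*\<^sup>* ([] @ a @ c) ([] @ b @ c)" using der_ctx[OF 1] .
  moreover have "(cfg_step P)\<^sup>*\<^sup>* (b @ c @ []) (b @ d @ [])" using der_ctx[OF 2] .
  ultimately show ?thesis by simp
qed

lemma forest_der: "\<forall>t\<in>set ts. (cfg_step P)\<^sup>*\<^sup>* [pt_root t] (map Inr (pt_yield t)) \<Longrightarrow>
  (cfg_step P)\<^sup>*\<^sup>* (map pt_root ts) (map Inr (concat (map pt_yield ts)))"
proof (induction ts)
  case Nil then show ?case by simp
next
  case (Cons t ts)
  then show ?case using der_app[of P "[pt_root t]" _ "map pt_root ts"] by simp
qed

lemma tree_der: "pt_valid P t \<Longrightarrow> (cfg_step P)\<^sup>*\<^sup>* [pt_root t] (map Inr (pt_yield t))"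
proof (induction t)
  case (Leaf a) then show ?case by simp
next
  case (Node A ts)
  have "cfg_step P ([] @ [Inl A] @ []) ([] @ map pt_root ts @ [])"
    using Node.prems by (intro cfg_step.intros) simp
  then have s: "cfg_step P [Inl A] (map pt_root ts)" by simp
  have "(cfg_step P)\<^sup>*\<^sup>* (map pt_root ts) (map Inr (concat (map pt_yield ts)))"
    using Node by (intro forest_der) auto
  with s show ?case by (simp add: converse_rtranclp_into_rtranclp)
qed

lemma der_forest: "(cfg_step P)\<^sup>*\<^sup>* al be \<Longrightarrow> \<forall>t\<in>set fs. pt_valid P t \<Longrightarrow> map pt_root fs = be \<Longrightarrow>
  \<exists>fs'. (\<forall>t\<in>set fs'. pt_valid P t) \<and> map pt_root fs' = al \<and>
        concat (map pt_yield fs') = concat (map pt_yield fs)"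
proof (induction arbitrary: fs rule: converse_rtranclp_induct)
  case base then show ?case by blast
next
  case (step a b)
  from step.IH[OF step.prems] obtain fs' where f: "\<forall>t\<in>set fs'. pt_valid P t" "map pt_root fs' = b"
    "concat (map pt_yield fs') = concat (map pt_yield fs)" by blast
  from step.hyps(1) obtain u A v al where "a = u @ [Inl A] @ v" "b = u @ al @ v" "(A, al) \<in> P"
    by (auto elim: cfg_step.cases)
  have mm: "map pt_root fs' = u @ (al @ v)" using f(2) \<open>b = _\<close> by simp
  from map_eq_append_conv[THEN iffD1, OF mm] obtain f1 g where
    h1: "fs' = f1 @ g \<and> u = map pt_root f1 \<and> al @ v = map pt_root g" by blast
  then have mg: "map pt_root g = al @ v" by simp
  from map_eq_append_conv[THEN iffD1, OF mg] obtain f2 f3 where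
    h2: "g = f2 @ f3 \<and> al = map pt_root f2 \<and> v = map pt_root f3" by blast
  have "fs' = f1 @ f2 @ f3" "map pt_root f1 = u" "map pt_root f2 = al" "map pt_root f3 = v"
    using h1 h2 by simp_all
  show ?case
  proof (intro exI conjI)
    show "\<forall>t\<in>set (f1 @ [Node A f2] @ f3). pt_valid P t"
      using f(1) \<open>fs' = f1 @ f2 @ f3\<close> \<open>map pt_root f2 = al\<close> \<open>(A, al) \<in> P\<close> by auto
    show "map pt_root (f1 @ [Node A f2] @ f3) = a"
      using \<open>map pt_root f1 = u\<close> \<open>map pt_root f3 = v\<close> \<open>a = _\<close> by simp
    show "concat (map pt_yield (f1 @ [Node A f2] @ f3)) = concat (map pt_yield fs)"
      using f(3) \<open>fs' = f1 @ f2 @ f3\<close> by simp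
  qed
qed

lemma lang_tree:
  fixes P :: "('n \<times> ('n + 't) list) set"
  assumes "w \<in> cfg_lang P S"
  shows "\<exists>t. pt_valid P t \<and> pt_root t = Inl S \<and> pt_yield t = w"
proof -
  define fs :: "('n,'t) ptree list" where "fs = map Leaf w"
  have d: "(cfg_step P)\<^sup>*\<^sup>* [Inl S] (map Inr w)" using assms by (simp add: cfg_lang_def)
  have m: "map pt_root fs = map Inr w" by (simp add: fs_def)
  have v: "\<forall>t\<in>set fs. pt_valid P t" by (simp add: fs_def)
  have cw: "concat (map pt_yield fs) = w" unfolding fs_def by (induction w) simp_all
  have ex: "\<exists>fs'. (\<forall>t\<in>set fs'. pt_valid P t) \<and> map pt_root fs' = [Inl S] \<and>
    concat (map pt_yield fs') = concat (map pt_yield fs)" by (rule der_forest[OF d v m])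
  then obtain fs' where f: "(\<forall>t\<in>set fs'. pt_valid P t) \<and> map pt_root fs' = [Inl S] \<and>
    concat (map pt_yield fs') = concat (map pt_yield fs)" ..
  then have "length fs' = 1" proof -
    have "length (map pt_root fs') = length [Inl S :: 'n + 't]" using f by simp
    then show ?thesis by simp
  qed
  then obtain t where t: "fs' = [t]" by (cases fs') simp_all
  show ?thesis using f cw t by (intro exI[of _ t]) simp
qed

lemma subs_trans: "s \<in> pt_subs t \<Longrightarrow> s' \<in> pt_subs s \<Longrightarrow> s' \<in> pt_subs t"
  by (induction t) auto

lemma subs_self: "t \<in> pt_subs t" by (cases t) auto

lemma subs_valid: "s \<in> pt_subs t \<Longrightarrow> pt_valid P t \<Longrightarrow> pt_valid P s"
  by (induction t) auto

lemma subs_size: "s \<in> pt_subs t \<Longrightarrow> pt_size s \<le> pt_size t"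
proof (induction t)
  case (Leaf a) then show ?case by simp
next
  case (Node A ts)
  show ?case
  proof (cases "s = Node A ts")
    case True then show ?thesis by simp
  next
    case False
    then obtain c where c: "c \<in> set ts" "s \<in> pt_subs c" using Node.prems by auto
    have "pt_size c \<le> sum_list (map pt_size ts)" using c(1) by (simp add: member_le_sum_list)
    with Node.IH[OF c] show ?thesis by simp
  qed
qed

lemma replace: "s \<in> pt_subs t \<Longrightarrow> \<exists>u v. pt_yield t = u @ pt_yield s @ v \<and>
   (\<forall>s2. pt_valid P t \<longrightarrow> pt_valid P s2 \<longrightarrow> pt_root s2 = pt_root s \<longrightarrow>
      (\<exists>t2. pt_valid P t2 \<and> pt_root t2 = pt_root t \<and> pt_yield t2 = u @ pt_yield s2 @ v \<and>
            pt_size t2 + pt_size s = pt_size t + pt_size s2))"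
proof (induction t)
  case (Leaf a) then show ?case by (intro exI[of _ "[]"]) auto
next
  case (Node A ts)
  show ?case
  proof (cases "s = Node A ts")
    case True then show ?thesis by (intro exI[of _ "[]"]) auto
  next
    case False
    then obtain c where c: "c \<in> set ts" "s \<in> pt_subs c" using Node.prems by auto
    from Node.IH[OF c] obtain u v where uv: "pt_yield c = u @ pt_yield s @ v \<and>
      (\<forall>s2. pt_valid P c \<longrightarrow> pt_valid P s2 \<longrightarrow> pt_root s2 = pt_root s \<longrightarrow>
      (\<exists>t2. pt_valid P t2 \<and> pt_root t2 = pt_root c \<and> pt_yield t2 = u @ pt_yield s2 @ v \<and>
            pt_size t2 + pt_size s = pt_size c + pt_size s2))" by blast
    from c(1) obtain ts1 ts2 where ts: "ts = ts1 @ c # ts2" by (meson split_list)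
    show ?thesis
    proof (rule exI[of _ "concat (map pt_yield ts1) @ u"], rule exI[of _ "v @ concat (map pt_yield ts2)"], intro conjI allI impI)
      show "pt_yield (Node A ts) = (concat (map pt_yield ts1) @ u) @ pt_yield s @ (v @ concat (map pt_yield ts2))"
        using ts uv by simp
    next
      fix s2 assume h: "pt_valid P (Node A ts)" "pt_valid P s2" "pt_root s2 = pt_root s"
      then have "pt_valid P c" using c(1) by auto
      from uv[THEN conjunct2, rule_format, OF this h(2) h(3)] obtain c2 where c2': "pt_valid P c2 \<and> pt_root c2 = pt_root c \<and>
        pt_yield c2 = u @ pt_yield s2 @ v \<and> pt_size c2 + pt_size s = pt_size c + pt_size s2" by blast
      then have c2: "pt_valid P c2" "pt_root c2 = pt_root c"
        "pt_yield c2 = u @ pt_yield s2 @ v" "pt_size c2 + pt_size s = pt_size c + pt_size s2" by simp_all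
      show "\<exists>t2. pt_valid P t2 \<and> pt_root t2 = pt_root (Node A ts) \<and>
        pt_yield t2 = (concat (map pt_yield ts1) @ u) @ pt_yield s2 @ (v @ concat (map pt_yield ts2)) \<and>
        pt_size t2 + pt_size s = pt_size (Node A ts) + pt_size s2"
        apply (rule exI[of _ "Node A (ts1 @ c2 # ts2)"])
        apply (intro conjI)
        subgoal using h(1) c2 ts by simp
        subgoal using h(1) c2 ts by simp
        subgoal using h(1) c2 ts by simp
        subgoal using h(1) c2 ts by simp
        done
    qed
  qed
qed



lemma rep:
  fixes t :: "('n,'t) ptree"
  assumes "finite N"
  shows "(\<forall>A ts. Node A ts \<in> pt_subs t \<longrightarrow> A \<in> N) \<Longrightarrow> card (N - X) < pt_height t \<Longrightarrow>
    (\<exists>A ts. Node A ts \<in> pt_subs t \<and> A \<in> X) \<or>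
    (\<exists>B ts c s'. Node B ts \<in> pt_subs t \<and> c \<in> set ts \<and> s' \<in> pt_subs c \<and> pt_root s' = Inl B)"
proof (induction t arbitrary: X)
  case (Leaf a) then show ?case by simp
next
  case (Node A ts)
  show ?case
  proof (cases "A \<in> X")
    case True
    then show ?thesis by (intro disjI1 exI[of _ A] exI[of _ ts]) simp
  next
    case False
    have AN: "A \<in> N" using Node.prems(1) by simp
    have eq: "N - X = insert A (N - insert A X)" using AN False by blast
    have "card (N - X) = Suc (card (N - insert A X))"
      using assms eq by (metis card_insert_disjoint finite_Diff insertCI Diff_iff)
    with Node.prems(2) have "card (N - insert A X) < Max (set (0 # map pt_height ts))" by simp
    then obtain x where "x \<in> set (0 # map pt_height ts)" "card (N - insert A X) < x"
      using Max_gr_iff[of "set (0 # map pt_height ts)"] by auto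
    then obtain c where c: "c \<in> set ts" "card (N - insert A X) < pt_height c" by auto
    have lab: "\<forall>A ts. Node A ts \<in> pt_subs c \<longrightarrow> A \<in> N" using Node.prems(1) c(1) by auto
    from Node.IH[OF c(1) lab c(2)] show ?thesis
    proof
      assume "\<exists>A' ts'. Node A' ts' \<in> pt_subs c \<and> A' \<in> insert A X"
      then obtain A' ts' where h: "Node A' ts' \<in> pt_subs c" "A' \<in> insert A X" by blast
      show ?thesis
      proof (cases "A' = A")
        case True
        show ?thesis
          apply (rule disjI2)
          apply (rule exI[of _ A], rule exI[of _ ts], rule exI[of _ c], rule exI[of _ "Node A' ts'"])
          using h c True by simp
      next
        case False
        then have "A' \<in> X" using h by simp
        show ?thesis
          apply (rule disjI1)
          apply (rule exI[of _ A'], rule exI[of _ ts'])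
          using h c \<open>A' \<in> X\<close> by auto
      qed
    next
      assume "\<exists>B ts' c' s'. Node B ts' \<in> pt_subs c \<and> c' \<in> set ts' \<and> s' \<in> pt_subs c' \<and> pt_root s' = Inl B"
      then obtain B ts' c' s' where h: "Node B ts' \<in> pt_subs c" "c' \<in> set ts'" "s' \<in> pt_subs c'" "pt_root s' = Inl B"
        by blast
      show ?thesis
        apply (rule disjI2)
        apply (rule exI[of _ B], rule exI[of _ ts'], rule exI[of _ c'], rule exI[of _ s'])
        using h c by auto
    qed
  qed
qed

lemma len_bound:
  "pt_valid P t \<Longrightarrow> (\<forall>x\<in>P. length (snd x) \<le> k) \<Longrightarrow> 1 \<le> k \<Longrightarrow> length (pt_yield t) \<le> k ^ pt_height t"
proof (induction t)
  case (Leaf a) then show ?case by simp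
next
  case (Node A ts)
  define h where "h = Max (set (0 # map pt_height ts))"
  have hc: "pt_height c \<le> h" if "c \<in> set ts" for c unfolding h_def using that by simp
  have "length (pt_yield (Node A ts)) = sum_list (map (\<lambda>c. length (pt_yield c)) ts)"
    by (simp add: length_concat comp_def)
  also have "\<dots> \<le> sum_list (map (\<lambda>c. k ^ h) ts)"
  proof (rule sum_list_mono)
    fix c assume c: "c \<in> set ts"
    have "length (pt_yield c) \<le> k ^ pt_height c" using Node c by simp
    also have "\<dots> \<le> k ^ h" using hc[OF c] Node.prems(3) by (simp add: power_increasing)
    finally show "length (pt_yield c) \<le> k ^ h" .
  qed
  also have "\<dots> = length ts * k ^ h" by (simp add: sum_list_triv)
  also have "\<dots> \<le> k * k ^ h"
  proof -
    have "(A, map pt_root ts) \<in> P" using Node.prems(1) by simp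
    then have "length (map pt_root ts) \<le> k" using Node.prems(2) by fastforce
    then show ?thesis by simp
  qed
  also have "\<dots> = k ^ pt_height (Node A ts)" by (simp add: h_def)
  finally show ?case .
qed



lemma pump:
  fixes P :: "('n \<times> ('n + 't) list) set"
  assumes fin: "finite P" and w: "w \<in> cfg_lang P S"
    and big: "(Suc (\<Sum>x\<in>P. length (snd x))) ^ card (fst ` P) < length w"
  shows "\<exists>l p. 0 < p \<and> (\<forall>k. \<exists>w'\<in>cfg_lang P S. length w' = l + k * p)"
proof -
  define K where "K = Suc (\<Sum>x\<in>P. length (snd x))"
  define N where "N = fst ` P"
  have Kb: "\<forall>x\<in>P. length (snd x) \<le> K"
  proof
    fix x assume "x \<in> P"
    then have "length (snd x) \<le> (\<Sum>x\<in>P. length (snd x))"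
      using fin by (intro member_le_sum) auto
    then show "length (snd x) \<le> K" unfolding K_def by simp
  qed
  have K1: "1 \<le> K" unfolding K_def by simp
  define E where "E = (\<lambda>t::('n,'t) ptree. pt_valid P t \<and> pt_root t = Inl S \<and> pt_yield t = w)"
  obtain t0 where "E t0" using lang_tree[OF w] unfolding E_def by blast
  from ex_has_least_nat[of E t0 pt_size, OF this] obtain t where
    tmin: "E t \<and> (\<forall>y. E y \<longrightarrow> pt_size t \<le> pt_size y)" by blast
  then have tv: "pt_valid P t" and tr: "pt_root t = Inl S" and tw: "pt_yield t = w"
    and tm: "\<And>y. E y \<Longrightarrow> pt_size t \<le> pt_size y" unfolding E_def by auto
  have hgt: "card (N - {}) < pt_height t"
  proof (rule ccontr)
    assume "\<not> card (N - {}) < pt_height t"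
    then have "pt_height t \<le> card N" by simp
    then have "K ^ pt_height t \<le> K ^ card N" using K1 by (simp add: power_increasing)
    moreover have "length w \<le> K ^ pt_height t" using len_bound[OF tv Kb K1] tw by simp
    ultimately show False using big unfolding K_def N_def by simp
  qed
  have lab: "\<forall>A ts. Node A ts \<in> pt_subs t \<longrightarrow> A \<in> N"
  proof (intro allI impI)
    fix A ts assume "Node A ts \<in> pt_subs t"
    then have "pt_valid P (Node A ts)" using subs_valid tv by blast
    then have "(A, map pt_root ts) \<in> P" by simp
    then show "A \<in> N" unfolding N_def by force
  qed
  have finN: "finite N" unfolding N_def using fin by simp
  from rep[OF finN lab hgt] obtain B ts c s' where
    h: "Node B ts \<in> pt_subs t" "c \<in> set ts" "s' \<in> pt_subs c" "pt_root s' = Inl B" by blast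
  define s where "s = Node B ts"
  have s's: "s' \<in> pt_subs s" unfolding s_def using h(2,3) by auto
  have sv: "pt_valid P s" using subs_valid[OF h(1) tv] unfolding s_def .
  have s'v: "pt_valid P s'" using subs_valid[OF s's sv] .
  have rs: "pt_root s = Inl B" unfolding s_def by simp
  have "pt_size s' \<le> pt_size c" using subs_size[OF h(3)] .
  moreover have "pt_size c \<le> sum_list (map pt_size ts)" using h(2) by (simp add: member_le_sum_list)
  ultimately have sz: "pt_size s' < pt_size s" unfolding s_def by simp
  from replace[OF h(1)[folded s_def]] obtain y z where R1: "pt_yield t = y @ pt_yield s @ z \<and>
   (\<forall>s2. pt_valid P t \<longrightarrow> pt_valid P s2 \<longrightarrow> pt_root s2 = pt_root s \<longrightarrow>
      (\<exists>t2. pt_valid P t2 \<and> pt_root t2 = pt_root t \<and> pt_yield t2 = y @ pt_yield s2 @ z \<and>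
            pt_size t2 + pt_size s = pt_size t + pt_size s2))" by blast
  from replace[OF s's] obtain u v where R2: "pt_yield s = u @ pt_yield s' @ v \<and>
   (\<forall>s2. pt_valid P s \<longrightarrow> pt_valid P s2 \<longrightarrow> pt_root s2 = pt_root s' \<longrightarrow>
      (\<exists>t2. pt_valid P t2 \<and> pt_root t2 = pt_root s \<and> pt_yield t2 = u @ pt_yield s2 @ v \<and>
            pt_size t2 + pt_size s' = pt_size s + pt_size s2))" by blast
  have R1': "\<exists>t2. pt_valid P t2 \<and> pt_root t2 = Inl S \<and> pt_yield t2 = y @ pt_yield s2 @ z \<and>
            pt_size t2 + pt_size s = pt_size t + pt_size s2"
    if "pt_valid P s2" "pt_root s2 = Inl B" for s2
    using R1[THEN conjunct2, rule_format, OF tv that(1)] that(2) rs tr by simp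
  have R2': "\<exists>t2. pt_valid P t2 \<and> pt_root t2 = Inl B \<and> pt_yield t2 = u @ pt_yield s2 @ v"
    if "pt_valid P s2" "pt_root s2 = Inl B" for s2
    using R2[THEN conjunct2, rule_format, OF sv that(1)] that(2) rs h(4) by auto
  have pos: "0 < length u + length v"
  proof (rule ccontr)
    assume "\<not> 0 < length u + length v"
    then have "u = []" "v = []" by auto
    then have ys: "pt_yield s' = pt_yield s" using R2 by simp
    from R1'[OF s'v h(4)] obtain t2 where t2: "pt_valid P t2" "pt_root t2 = Inl S"
      "pt_yield t2 = y @ pt_yield s' @ z" "pt_size t2 + pt_size s = pt_size t + pt_size s'" by blast
    have "E t2" unfolding E_def using t2 ys R1 tw by simp
    then have "pt_size t \<le> pt_size t2" by (rule tm)
    with t2(4) sz show False by simp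
  qed
  have fam: "\<exists>T. pt_valid P T \<and> pt_root T = Inl B \<and>
      length (pt_yield T) = length (pt_yield s') + k * (length u + length v)" for k
  proof (induction k)
    case 0 show ?case using s'v h(4) by (intro exI[of _ s']) simp
  next
    case (Suc k)
    then obtain T where T: "pt_valid P T" "pt_root T = Inl B"
      "length (pt_yield T) = length (pt_yield s') + k * (length u + length v)" by blast
    from R2'[OF T(1,2)] obtain T2 where "pt_valid P T2" "pt_root T2 = Inl B" "pt_yield T2 = u @ pt_yield T @ v"
      by blast
    then show ?case using T(3) by (intro exI[of _ T2]) simp
  qed
  show ?thesis
  proof (intro exI conjI allI)
    show "0 < length u + length v" by (rule pos)
  next
    fix k
    from fam[of k] obtain T where T: "pt_valid P T" "pt_root T = Inl B"
      "length (pt_yield T) = length (pt_yield s') + k * (length u + length v)" by blast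
    from R1'[OF T(1,2)] obtain t2 where t2: "pt_valid P t2" "pt_root t2 = Inl S"
      "pt_yield t2 = y @ pt_yield T @ z" by blast
    have "pt_yield t2 \<in> cfg_lang P S" using tree_der[OF t2(1)] t2(2) by (simp add: cfg_lang_def)
    moreover have "length (pt_yield t2) = (length y + length z + length (pt_yield s')) + k * (length u + length v)"
      using t2(3) T(3) by simp
    ultimately show "\<exists>w'\<in>cfg_lang P S. length w' = (length y + length z + length (pt_yield s')) + k * (length u + length v)"
      by blast
  qed
qed



definition dlt :: "nat \<Rightarrow> nat option \<Rightarrow> (nat \<times> (int \<times> rat)) set" where
  "dlt q s = (if q = 0 \<and> s = None then {(0,(1,0)),(1,(0,1))}
              else if q = 1 \<and> s = None then {(1,(-1,0)),(2,(0,0))}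
              else if q = 2 \<and> s = Some 0 then {(2,(0,-1))} else {})"

lemma bs_mult: "(k1, r1) \<otimes>\<^bsub>BS12\<^esub> (k2, r2) = (k1 + k2, (2::rat) powi k1 * r2 + r1)"
  by (simp add: BS12_def)

lemma bs_one: "\<one>\<^bsub>BS12\<^esub> = (0, 0)" by (simp add: BS12_def)

lemma runs_dlt: "runs BS12 dlt q x w q' y \<Longrightarrow>
  (q = 2 \<longrightarrow> q' = 2 \<and> y = (fst x, snd x - of_nat (length w) * 2 powi fst x)) \<and>
  (q = 1 \<longrightarrow> (q' = 1 \<and> w = [] \<and> (\<exists>j::nat. y = (fst x - int j, snd x))) \<or>
     (q' = 2 \<and> (\<exists>j::nat. y = (fst x - int j, snd x - of_nat (length w) * 2 powi (fst x - int j))))) \<and>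
  (q = 0 \<longrightarrow> q' = 2 \<longrightarrow> (\<exists>i j::nat. y = (fst x + int i - int j,
       snd x + 2 powi (fst x + int i) - of_nat (length w) * 2 powi (fst x + int i - int j))))"
proof (induction rule: runs.induct)
  case (run_nil q x)
  have A: "\<exists>j::nat. x = (fst x - int j, snd x)" by (intro exI[of _ 0]) simp
  show ?case using A by simp
next
  case (run_eps q' m q x w q'' y)
  obtain k r where x: "x = (k, r)" by fastforce
  have C2: "q = 2 \<longrightarrow> q'' = 2 \<and> y = (fst x, snd x - of_nat (length w) * 2 powi fst x)"
      using run_eps.hyps(1) by (simp add: dlt_def split: if_splits)
  have C1: "q = 1 \<longrightarrow> (q'' = 1 \<and> w = [] \<and> (\<exists>j::nat. y = (fst x - int j, snd x))) \<or>
     (q'' = 2 \<and> (\<exists>j::nat. y = (fst x - int j, snd x - of_nat (length w) * 2 powi (fst x - int j))))"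
  proof
    assume q1: "q = 1"
    then have "(q', m) = (1, (-1, 0)) \<or> (q', m) = (2, (0, 0))" using run_eps.hyps(1) by (simp add: dlt_def)
    then show "(q'' = 1 \<and> w = [] \<and> (\<exists>j::nat. y = (fst x - int j, snd x))) \<or>
     (q'' = 2 \<and> (\<exists>j::nat. y = (fst x - int j, snd x - of_nat (length w) * 2 powi (fst x - int j))))"
    proof
      assume "(q', m) = (1, (-1, 0))"
      then have qm: "q' = 1" "m = (-1, 0)" by auto
      have xm: "x \<otimes>\<^bsub>BS12\<^esub> m = (k - 1, r)" using x qm by (simp add: bs_mult)
      have D: "(q'' = 1 \<and> w = [] \<and> (\<exists>j::nat. y = (k - 1 - int j, r))) \<or>
        (q'' = 2 \<and> (\<exists>j::nat. y = (k - 1 - int j, r - of_nat (length w) * 2 powi (k - 1 - int j))))"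
        using run_eps.IH qm xm by simp
      then show ?thesis
      proof
        assume h: "q'' = 1 \<and> w = [] \<and> (\<exists>j::nat. y = (k - 1 - int j, r))"
        then obtain j :: nat where "y = (k - 1 - int j, r)" by blast
        then have "y = (fst x - int (Suc j), snd x)" using x by simp
        then show ?thesis using h by blast
      next
        assume h: "q'' = 2 \<and> (\<exists>j::nat. y = (k - 1 - int j, r - of_nat (length w) * 2 powi (k - 1 - int j)))"
        then obtain j :: nat where "y = (k - 1 - int j, r - of_nat (length w) * 2 powi (k - 1 - int j))" by blast
        then have "y = (fst x - int (Suc j), snd x - of_nat (length w) * 2 powi (fst x - int (Suc j)))"
          using x by (simp add: algebra_simps)
        then show ?thesis using h by blast
      qed
    next
      assume "(q', m) = (2, (0, 0))"
      then have qm: "q' = 2" "m = (0, 0)" by auto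
      have xm: "x \<otimes>\<^bsub>BS12\<^esub> m = (k, r)" using x qm by (simp add: bs_mult)
      from run_eps.IH qm xm show ?thesis using x by (intro disjI2) (auto intro!: exI[of _ 0])
    qed
  qed
  have C0: "q = 0 \<longrightarrow> q'' = 2 \<longrightarrow> (\<exists>i j::nat. y = (fst x + int i - int j,
       snd x + 2 powi (fst x + int i) - of_nat (length w) * 2 powi (fst x + int i - int j)))"
  proof (intro impI)
    assume q0: "q = 0" and q2: "q'' = 2"
    then have "(q', m) = (0, (1, 0)) \<or> (q', m) = (1, (0, 1))" using run_eps.hyps(1) by (simp add: dlt_def)
    then show "\<exists>i j::nat. y = (fst x + int i - int j,
       snd x + 2 powi (fst x + int i) - of_nat (length w) * 2 powi (fst x + int i - int j))"
    proof
      assume "(q', m) = (0, (1, 0))"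
      then have qm: "q' = 0" "m = (1, 0)" by auto
      have xm: "x \<otimes>\<^bsub>BS12\<^esub> m = (k + 1, r)" using x qm by (simp add: bs_mult)
      from run_eps.IH qm xm q2 obtain i j :: nat where
        "y = (k + 1 + int i - int j, r + 2 powi (k + 1 + int i) - of_nat (length w) * 2 powi (k + 1 + int i - int j))"
        by auto
      then show ?thesis using x by (intro exI[of _ "Suc i"] exI[of _ j]) (simp add: algebra_simps)
    next
      assume "(q', m) = (1, (0, 1))"
      then have qm: "q' = 1" "m = (0, 1)" by auto
      have xm: "x \<otimes>\<^bsub>BS12\<^esub> m = (k, 2 powi k + r)" using x qm by (simp add: bs_mult)
      from run_eps.IH qm xm q2 obtain j :: nat where
        "y = (k - int j, 2 powi k + r - of_nat (length w) * 2 powi (k - int j))"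
        by auto
      then show ?thesis using x by (intro exI[of _ 0] exI[of _ j]) (simp add: algebra_simps)
    qed
  qed
  show ?case by (rule conjI[OF C2 conjI[OF C1 C0]])
next
  case (run_read q' m q s x w q'' y)
  obtain k r where x: "x = (k, r)" by fastforce
  have qm: "q = 2" "q' = 2" "m = (0, -1)" using run_read.hyps(1) by (auto simp: dlt_def split: if_splits)
  have xm: "x \<otimes>\<^bsub>BS12\<^esub> m = (k, r - 2 powi k)" using x qm by (simp add: bs_mult)
  from run_read.IH qm xm show ?case using x by (simp add: algebra_simps)
qed



lemma r2: "runs BS12 dlt 2 (k, r) (replicate m 0) 2 (k, r - of_nat m * 2 powi k)"
proof (induction m arbitrary: r)
  case 0 then show ?case by (simp add: runs.run_nil)
next
  case (Suc m)
  have e: "(k, r) \<otimes>\<^bsub>BS12\<^esub> (0, -1) = (k, r - 2 powi k)" by (simp add: bs_mult)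
  have "runs BS12 dlt 2 ((k, r) \<otimes>\<^bsub>BS12\<^esub> (0, -1)) (replicate m 0) 2 (k, r - of_nat (Suc m) * 2 powi k)"
    using Suc.IH[of "r - 2 powi k"] unfolding e by (simp add: algebra_simps)
  moreover have "(2, (0::int, -1::rat)) \<in> dlt 2 (Some 0)" by (simp add: dlt_def)
  ultimately show ?case by (simp add: runs.run_read)
qed

lemma r1: "runs BS12 dlt 2 (k, r) w 2 y \<Longrightarrow> runs BS12 dlt 1 (k + int j, r) w 2 y"
proof (induction j)
  case 0
  have e: "(k, r) \<otimes>\<^bsub>BS12\<^esub> (0, 0) = (k, r)" by (simp add: bs_mult)
  show ?case
    by (rule runs.run_eps[where q'=2 and m="(0::int, 0::rat)"]) (use e 0 in \<open>simp_all add: dlt_def\<close>)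
next
  case (Suc j)
  have e: "(k + int (Suc j), r) \<otimes>\<^bsub>BS12\<^esub> (-1, 0) = (k + int j, r)" by (simp add: bs_mult)
  show ?case
    by (rule runs.run_eps[where q'=1 and m="(-1::int, 0::rat)"]) (use e Suc in \<open>simp_all add: dlt_def\<close>)
qed

lemma r0: "runs BS12 dlt 1 (k + int i, r + 2 powi (k + int i)) w q y \<Longrightarrow> runs BS12 dlt 0 (k, r) w q y"
proof (induction i arbitrary: k)
  case 0
  have e: "(k, r) \<otimes>\<^bsub>BS12\<^esub> (0, 1) = (k, r + 2 powi k)" by (simp add: bs_mult)
  show ?case
    by (rule runs.run_eps[where q'=1 and m="(0::int, 1::rat)"]) (use e 0 in \<open>simp_all add: dlt_def\<close>)
next
  case (Suc i)
  have e: "(k, r) \<otimes>\<^bsub>BS12\<^esub> (1, 0) = (k + 1, r)" by (simp add: bs_mult)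
  have eq: "k + 1 + int i = k + int (Suc i)" by simp
  have R: "runs BS12 dlt 0 (k + 1, r) w q y" apply (rule Suc.IH) unfolding eq by (rule Suc.prems)
  show ?case
    apply (rule runs.run_eps[where q'=0 and m="(1::int, 0::rat)"])
     apply (simp add: dlt_def)
    using e R by simp
qed

lemma in_lang: "replicate (2 ^ n) 0 \<in> G_lang BS12 {0} dlt 0 {2}"
proof -
  have a: "runs BS12 dlt 2 (0, 2 powi int n) (replicate (2 ^ n) 0) 2 (0, 0)"
    using r2[of 0 "2 powi int n" "2 ^ n"] by simp
  have b: "runs BS12 dlt 1 (0 + int n, 2 powi int n) (replicate (2 ^ n) 0) 2 (0, 0)"
    using r1[OF a] .
  have c: "runs BS12 dlt 0 (0, 0) (replicate (2 ^ n) 0) 2 (0, 0)"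
    using b by (intro r0[of 0 n]) simp
  show ?thesis unfolding G_lang_def bs_one using c by auto
qed

lemma lang_pow: "w \<in> G_lang BS12 {0} dlt 0 {2} \<Longrightarrow> \<exists>n. length w = 2 ^ n"
proof -
  assume "w \<in> G_lang BS12 {0} dlt 0 {2}"
  then have "runs BS12 dlt 0 (0, 0) w 2 (0, 0)" unfolding G_lang_def bs_one by auto
  from runs_dlt[OF this] obtain i j :: nat where
    h: "(0::int, 0::rat) = (int i - int j, 2 powi int i - of_nat (length w) * 2 powi (int i - int j))" by auto
  then have "i = j" by simp
  with h have "(of_nat (length w) :: rat) = 2 ^ i" by simp
  then have "(of_nat (length w) :: rat) = of_nat (2 ^ i)" by simp
  then have "length w = 2 ^ i" using of_nat_eq_iff by blast
  then show ?thesis by blast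
qed

lemma no_ap: "0 < (p::nat) \<Longrightarrow> 2 ^ a = l \<Longrightarrow> 2 ^ b = l + p \<Longrightarrow> 2 ^ c = l + 2 * p \<Longrightarrow> False"
proof -
  assume h: "0 < p" "2 ^ a = l" "2 ^ b = l + p" "2 ^ c = l + 2 * p"
  have "(2::nat) ^ b < 2 ^ c" using h by simp
  then have "b < c" using power_less_imp_less_exp[of 2] by simp
  then have d1: "(2::nat) ^ b dvd 2 ^ c" by (simp add: le_imp_power_dvd)
  have d2: "(2::nat) ^ b dvd 2 * 2 ^ b" by simp
  have eq: "(2::nat) ^ a = 2 * 2 ^ b - 2 ^ c" using h by simp
  have "(2::nat) ^ b dvd 2 ^ a" unfolding eq using d1 d2 by (simp add: dvd_diff_nat)
  then have "(2::nat) ^ b \<le> 2 ^ a" by (simp add: dvd_imp_le)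
  then show False using h by simp
qed

lemma carr: "(k, of_int m) \<in> carrier BS12"
  by (auto simp: BS12_def intro!: exI[of _ m] exI[of _ "0::nat"])

theorem theorem3p13:
  shows "\<exists>(Q :: nat set) (Sig :: nat set)
            (delta :: nat \<Rightarrow> nat option \<Rightarrow> (nat \<times> (int \<times> rat)) set) q0 Qa.
           is_G_automaton BS12 Q Sig delta q0 Qa \<and>
           \<not> is_CFL (G_lang BS12 Sig delta q0 Qa)"
proof (intro exI conjI)
  have c1: "(1::int, 0::rat) \<in> carrier BS12" using carr[of 1 0] by simp
  have c2: "(0::int, 1::rat) \<in> carrier BS12" using carr[of 0 1] by simp
  have c3: "(-1::int, 0::rat) \<in> carrier BS12" using carr[of "-1" 0] by simp
  have c4: "(0::int, 0::rat) \<in> carrier BS12" using carr[of 0 0] by simp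
  have c5: "(0::int, -1::rat) \<in> carrier BS12" using carr[of 0 "-1"] by simp
  show "is_G_automaton BS12 {0,1,2} {0} dlt 0 {2}"
  proof -
    have sub: "dlt q s \<subseteq> {0,1,2} \<times> carrier BS12" for q s
      using c1 c2 c3 c4 c5 by (simp add: dlt_def)
    have fi: "finite (dlt q s)" for q s by (simp add: dlt_def)
    show ?thesis unfolding is_G_automaton_def using sub fi by simp
  qed
  show "\<not> is_CFL (G_lang BS12 {0} dlt 0 {2})"
  proof
    assume "is_CFL (G_lang BS12 {0} dlt 0 {2})"
    then obtain P :: "(nat \<times> (nat + nat) list) set" and S where
      fin: "finite P" and L: "G_lang BS12 {0} dlt 0 {2} = cfg_lang P S" unfolding is_CFL_def by blast
    define b where "b = (Suc (\<Sum>x\<in>P. length (snd x))) ^ card (fst ` P)"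
    have w: "replicate (2 ^ b) 0 \<in> cfg_lang P S" using in_lang[of b] L by simp
    have big: "(Suc (\<Sum>x\<in>P. length (snd x))) ^ card (fst ` P) < length (replicate (2 ^ b) (0::nat))"
      unfolding b_def by simp
    from pump[OF fin w big] obtain l p where lp: "0 < p" "\<forall>k. \<exists>w'\<in>cfg_lang P S. length w' = l + k * p"
      by blast
    have pw: "\<exists>n. 2 ^ n = l + k * p" for k
    proof -
      obtain w' where "w' \<in> cfg_lang P S" "length w' = l + k * p" using lp(2) by blast
      then show ?thesis using lang_pow L by metis
    qed
    obtain a where A: "2 ^ a = l + 0 * p" using pw by blast
    obtain b' where B: "2 ^ b' = l + 1 * p" using pw by blast
    obtain c where C: "2 ^ c = l + 2 * p" using pw by blast
    have A': "2 ^ a = l" using A by simp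
    have B': "2 ^ b' = l + p" using B by simp
    show False by (rule no_ap[OF lp(1) A' B' C])
  qed
qed


end
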